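(* Let $S$ be a random walk on $\mathbb{Z}^2$ with symmetric, sub-Gaussian increments and $\mathsf c$ as in the context. For any $h\ge3$, $t\ge0$, $s\in(0,1]$, $L\in\mathbb{N}$, $f:\mathbb{Z}^2\to\mathbb{R}$ and $p\in(1,\infty)$, with $\mathscr C:=\mathsf c\,e^{2\mathsf ct^2L}$, $$\max_{\substack{J\text{ pair}\\ I\ne*,\ I\not\supseteq J}}\Big\|\widehat{\mathsf q}^{|f|,I}_L\tfrac{\mathcal V^J_s}{\mathcal W_t}\Big\|_{\ell^p}\le36^{1/p}\,\mathscr C^h\,\frac L{s^{2/p}}\Big\|\frac f{w_t}\Big\|_{\ell^\infty}^2\Big\|\frac f{w_t}\Big\|_{\ell^p}^{h-2}.$$
   Context: Walk assumption: $q_1(x)=q_1(-x)$ and $\exists c>0$ with $\sum_xe^{tx^a}q_1(x)\le e^{ct^2/2}$ for all $t\in\mathbb{R}$, $a=1,2$. $q_n(x):=\mathrm{P}(S_n=x\mid S_0=0)$, $q^f_n(x):=\sum_zq_n(x-z)f(z)$. $\mathsf c\in[1,\infty)$ is a constant such that for all $t\ge0$, $n\in\mathbb{N}$, $a=1,2$: $\sum_xe^{tx^a}q_n(x)\le e^{\mathsf ct^2n/2}$, $\sum_xe^{tx^a}q_n(x)^2/q_{2n}(0)\le e^{\mathsf ct^2n/2}$, $\sum_xe^{t|x|}q_n(x)\le\mathsf ce^{2\mathsf ct^2n}$, $\sup_xe^{t|x|}q_n(x)\le\mathsf ce^{2\mathsf ct^2n}/n$. Weights: $w_t(x):=e^{-t|x|}$,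 $\mathcal W_t(\mathbf x):=\prod_iw_t(x^i)$; for a pair $J=\{\{a,b\}\}\cup\{\{c\}:c\ne a,b\}$, $\mathcal V^J_s(\mathbf x):=e^{-s|x^a-x^b|}$. Partitions $I\vdash\{1,..,h\}$, $*$ = all singletons; $\mathbf x\sim I$: $x^a=x^b$ for $a,b$ in a common block, $x^a\ne x^b$ for $a,b$ in distinct blocks of size $\ge2$. $I\not\supseteq J$ (for $J$ the pair with doubleton $\{a,b\}$) means no block of $I$ contains $\{a,b\}$. $\mathsf q^{f,I}_n(\mathbf x):=\mathbf 1_{\{\mathbf x\sim I\}}\prod_iq^f_n(x^i)$, $\widehat{\mathsf q}^{f,I}_L:=\sum_{n=1}^L\mathsf q^{f,I}_n$; products with weights are pointwise. *)

theory Defs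
  imports "HOL-Analysis.Analysis" "HOL-Library.Disjoint_Sets"
begin

type_synonym pt = "int \<times> int"

definition enorm :: "pt \<Rightarrow> real" where
  "enorm z = sqrt ((real_of_int (fst z))\<^sup>2 + (real_of_int (snd z))\<^sup>2)"

definition coord :: "nat \<Rightarrow> pt \<Rightarrow> real" where
  "coord a z = (if a = 1 then real_of_int (fst z) else real_of_int (snd z))"

text \<open>n-step transition kernel q_n(x) = P(S_n = x | S_0 = 0) of the random walk
  with step distribution q1 (n-fold convolution power).\<close>
fun qn :: "(pt \<Rightarrow> real) \<Rightarrow> nat \<Rightarrow> pt \<Rightarrow> real" where
  "qn q1 0 x = (if x = (0, 0) then 1 else 0)"
| "qn q1 (Suc n) x = (\<Sum>\<^sub>\<infinity>z. qn q1 n (x - z) * q1 z)"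

definition qf :: "(pt \<Rightarrow> real) \<Rightarrow> nat \<Rightarrow> (pt \<Rightarrow> real) \<Rightarrow> pt \<Rightarrow> real" where
  "qf q1 n f x = (\<Sum>\<^sub>\<infinity>z. qn q1 n (x - z) * f z)"

definition w :: "real \<Rightarrow> pt \<Rightarrow> real" where
  "w t z = exp (- t * enorm z)"

text \<open>Points x = (x^1,...,x^h) are functions on {1..h} (extensional).\<close>
definition WW :: "nat \<Rightarrow> real \<Rightarrow> (nat \<Rightarrow> pt) \<Rightarrow> real" where
  "WW h t x = (\<Prod>i\<in>{1..h}. w t (x i))"

text \<open>V^J_s for the pair J with doubleton {a,b}.\<close>
definition VV :: "nat \<Rightarrow> nat \<Rightarrow> real \<Rightarrow> (nat \<Rightarrow> pt) \<Rightarrow> real" where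
  "VV a b s x = exp (- s * enorm (x a - x b))"

definition singletons :: "nat \<Rightarrow> nat set set" where
  "singletons h = {{i} | i. i \<in> {1..h}}"

definition sim :: "nat set set \<Rightarrow> (nat \<Rightarrow> pt) \<Rightarrow> bool" where
  "sim I x \<longleftrightarrow>
     (\<forall>B\<in>I. \<forall>a\<in>B. \<forall>b\<in>B. x a = x b) \<and>
     (\<forall>B1\<in>I. \<forall>B2\<in>I. B1 \<noteq> B2 \<longrightarrow> card B1 \<ge> 2 \<longrightarrow> card B2 \<ge> 2 \<longrightarrow>
        (\<forall>a\<in>B1. \<forall>b\<in>B2. x a \<noteq> x b))"

definition qI :: "(pt \<Rightarrow> real) \<Rightarrow> nat \<Rightarrow> (pt \<Rightarrow> real) \<Rightarrow> nat set set \<Rightarrow> nat \<Rightarrow> (nat \<Rightarrow> pt) \<Rightarrow> real" where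
  "qI q1 h f I n x = (if sim I x then (\<Prod>i\<in>{1..h}. qf q1 n f (x i)) else 0)"

definition qhat :: "(pt \<Rightarrow> real) \<Rightarrow> nat \<Rightarrow> (pt \<Rightarrow> real) \<Rightarrow> nat set set \<Rightarrow> nat \<Rightarrow> (nat \<Rightarrow> pt) \<Rightarrow> real" where
  "qhat q1 h f I L x = (\<Sum>n = 1..L. qI q1 h f I n x)"

definition lpnorm :: "real \<Rightarrow> 'a set \<Rightarrow> ('a \<Rightarrow> real) \<Rightarrow> ennreal" where
  "lpnorm p A g = (let S = (\<integral>\<^sup>+ x. ennreal (\<bar>g x\<bar> powr p) \<partial>count_space A)
                   in if S = top then top else ennreal (enn2real S powr (1 / p)))"

definition linfnorm :: "'a set \<Rightarrow> ('a \<Rightarrow> real) \<Rightarrow> ennreal" where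
  "linfnorm A g = (SUP x\<in>A. ennreal \<bar>g x\<bar>)"

end

theory Submission
  imports Defs
begin

lemma nn_infsum_eq:
  fixes f :: "'a \<Rightarrow> real"
  assumes "f summable_on A" "\<And>x. x \<in> A \<Longrightarrow> f x \<ge> 0"
  shows "(\<integral>\<^sup>+x. ennreal (f x) \<partial>count_space A) = ennreal (infsum f A)"
proof -
  have "(\<lambda>x. norm (f x)) summable_on A"
    using assms(1) by (rule summable_on_cong[THEN iffD1, rotated]) (simp add: assms(2))
  then have "Infinite_Set_Sum.abs_summable_on f A" using abs_summable_equivalent by blast
  then have "(\<integral>\<^sup>+x. ennreal (f x) \<partial>count_space A) = ennreal (infsetsum f A)"
    using assms(2) by (rule nn_integral_conv_infsetsum)
  also have "infsetsum f A = infsum f A" using \<open>Infinite_Set_Sum.abs_summable_on f A\<close> by (rule infsetsum_infsum)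
  finally show ?thesis .
qed

lemma nn_infsum_le:
  fixes f :: "'a \<Rightarrow> real"
  assumes "\<And>x. x \<in> A \<Longrightarrow> f x \<ge> 0"
  shows "ennreal (infsum f A) \<le> (\<integral>\<^sup>+x. ennreal (f x) \<partial>count_space A)"
proof (cases "f summable_on A")
  case True then show ?thesis by (simp add: nn_infsum_eq[OF True assms])
next
  case False then show ?thesis by (simp add: infsum_not_exists)
qed

definition rv :: "pt \<Rightarrow> real \<times> real" where
  "rv z = (real_of_int (fst z), real_of_int (snd z))"

lemma enorm_rv: "enorm z = norm (rv z)"
  by (simp add: enorm_def rv_def norm_Pair)

lemma rv_diff: "rv (x - y) = rv x - rv y"
  by (simp add: rv_def)

lemma rv_add: "rv (x + y) = rv x + rv y"
  by (simp add: rv_def)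

lemma enorm_triangle: "enorm x \<le> enorm (x - z) + enorm z"
proof -
  have "rv x = rv (x - z) + rv z" by (simp add: rv_diff)
  then show ?thesis unfolding enorm_rv by (metis norm_triangle_ineq)
qed

lemma enorm_nonneg: "enorm x \<ge> 0" by (simp add: enorm_def)

lemma qn_nonneg:
  assumes "\<And>x. q1 x \<ge> 0"
  shows "qn q1 n x \<ge> 0"
proof (induction n arbitrary: x)
  case 0 then show ?case by simp
next
  case (Suc n) then show ?case
    by (simp add: infsum_nonneg assms)
qed

lemma nn_integral_count_space_Times:
  assumes "countable A" "countable B"
  shows "(\<integral>\<^sup>+z. G z \<partial>count_space (A \<times> B)) = (\<integral>\<^sup>+a. \<integral>\<^sup>+b. G (a,b) \<partial>count_space B \<partial>count_space A)"
proof -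
  have sf: "sigma_finite_measure (count_space B)"
    by (rule sigma_finite_measure_count_space_countable[OF assms(2)])
  have "(\<integral>\<^sup>+a. \<integral>\<^sup>+b. G (a,b) \<partial>count_space B \<partial>count_space A) = (\<integral>\<^sup>+z. G z \<partial>(count_space A \<Otimes>\<^sub>M count_space B))"
    by (rule sigma_finite_measure.nn_integral_fst[OF sf]) (simp add: pair_measure_countable assms)
  then show ?thesis by (simp add: pair_measure_countable assms)
qed

lemma PiE_peel:
  fixes F :: "('i \<Rightarrow> 'b::countable) \<Rightarrow> ennreal"
  assumes "finite D" "i \<notin> D"
  shows "(\<integral>\<^sup>+x. F x \<partial>count_space (PiE (insert i D) (\<lambda>_. UNIV)))
       = (\<integral>\<^sup>+u. \<integral>\<^sup>+y. F (y(i:=u)) \<partial>count_space (PiE D (\<lambda>_. UNIV)) \<partial>count_space UNIV)"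
proof -
  have inj: "inj_on (\<lambda>(u,y). y(i:=u)) (UNIV \<times> PiE D (\<lambda>_. UNIV::'b set))"
  proof (rule inj_onI)
    fix a b :: "'b \<times> ('i \<Rightarrow> 'b)"
    assume a: "a \<in> UNIV \<times> PiE D (\<lambda>_. UNIV::'b set)" and b: "b \<in> UNIV \<times> PiE D (\<lambda>_. UNIV::'b set)"
      and e: "(\<lambda>(u,y). y(i:=u)) a = (\<lambda>(u,y). y(i:=u)) b"
    obtain u1 y1 where A: "a = (u1, y1)" by (cases a)
    obtain u2 y2 where B: "b = (u2, y2)" by (cases b)
    have e2: "y1(i:=u1) = y2(i:=u2)" using e A B by simp
    have "u1 = u2" using fun_cong[OF e2, of i] by simp
    moreover have "y1 = y2"
    proof
      fix k show "y1 k = y2 k"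
      proof (cases "k = i")
        case True then show ?thesis using a b A B assms(2) by (auto simp: PiE_def extensional_def)
      next
        case False then show ?thesis using fun_cong[OF e2, of k] by simp
      qed
    qed
    ultimately show "a = b" using A B by simp
  qed
  have bij: "bij_betw (\<lambda>(u,y). y(i:=u)) (UNIV \<times> PiE D (\<lambda>_. UNIV::'b set)) (PiE (insert i D) (\<lambda>_. UNIV))"
    by (rule bij_betw_imageI[OF inj]) (rule PiE_insert_eq[symmetric])
  have cnt: "countable (PiE D (\<lambda>_. UNIV::'b set))" using assms(1) by (simp add: countable_PiE)
  have "(\<integral>\<^sup>+x. F x \<partial>count_space (PiE (insert i D) (\<lambda>_. UNIV)))
      = (\<integral>\<^sup>+z. F ((\<lambda>(u,y). y(i:=u)) z) \<partial>count_space (UNIV \<times> PiE D (\<lambda>_. UNIV)))"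
    by (rule nn_integral_bij_count_space[OF bij, symmetric])
  also have "\<dots> = (\<integral>\<^sup>+u. \<integral>\<^sup>+y. F (y(i:=u)) \<partial>count_space (PiE D (\<lambda>_. UNIV)) \<partial>count_space UNIV)"
    using nn_integral_count_space_Times[OF _ cnt, of UNIV "\<lambda>z. F ((\<lambda>(u,y). y(i:=u)) z)"] by simp
  finally show ?thesis .
qed

lemma PiE_prod_integral:
  fixes \<phi> :: "'i \<Rightarrow> 'b::countable \<Rightarrow> ennreal"
  assumes "finite D"
  shows "(\<integral>\<^sup>+x. (\<Prod>i\<in>D. \<phi> i (x i)) \<partial>count_space (PiE D (\<lambda>_. UNIV)))
       = (\<Prod>i\<in>D. \<integral>\<^sup>+u. \<phi> i u \<partial>count_space UNIV)"
  using assms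
proof (induction D rule: finite_induct)
  case empty
  then show ?case by (simp add: PiE_empty_domain nn_integral_count_space_finite)
next
  case (insert j D)
  have "(\<integral>\<^sup>+x. (\<Prod>i\<in>insert j D. \<phi> i (x i)) \<partial>count_space (PiE (insert j D) (\<lambda>_. UNIV)))
     = (\<integral>\<^sup>+u. \<integral>\<^sup>+y. (\<Prod>i\<in>insert j D. \<phi> i ((y(j:=u)) i)) \<partial>count_space (PiE D (\<lambda>_. UNIV)) \<partial>count_space UNIV)"
    by (rule PiE_peel[OF insert(1,2)])
  also have "\<dots> = (\<integral>\<^sup>+u. \<phi> j u * \<integral>\<^sup>+y. (\<Prod>i\<in>D. \<phi> i (y i)) \<partial>count_space (PiE D (\<lambda>_. UNIV)) \<partial>count_space UNIV)"
  proof (intro nn_integral_cong)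
    fix u
    have eqy: "(\<Prod>i\<in>insert j D. \<phi> i ((y(j:=u)) i)) = \<phi> j u * (\<Prod>i\<in>D. \<phi> i (y i))" for y :: "'i \<Rightarrow> 'b"
    proof -
      have "(\<Prod>i\<in>D. \<phi> i ((y(j:=u)) i)) = (\<Prod>i\<in>D. \<phi> i (y i))"
        by (rule prod.cong) (use insert(2) in auto)
      then show ?thesis using insert(1,2) by simp
    qed
    then show "(\<integral>\<^sup>+y. (\<Prod>i\<in>insert j D. \<phi> i ((y(j:=u)) i)) \<partial>count_space (PiE D (\<lambda>_. UNIV)))
        = \<phi> j u * \<integral>\<^sup>+y. (\<Prod>i\<in>D. \<phi> i (y i)) \<partial>count_space (PiE D (\<lambda>_. UNIV))"
      apply (simp only: eqy)
      by (rule nn_integral_cmult) simp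
  qed
  also have "\<dots> = (\<integral>\<^sup>+u. \<phi> j u \<partial>count_space UNIV) * (\<Prod>i\<in>D. \<integral>\<^sup>+u. \<phi> i u \<partial>count_space UNIV)"
    by (subst nn_integral_multc) (simp_all add: insert.IH)
  also have "\<dots> = (\<Prod>i\<in>insert j D. \<integral>\<^sup>+u. \<phi> i u \<partial>count_space UNIV)"
    by (rule prod.insert[symmetric]) (use insert(1,2) in auto)
  finally show ?case .
qed

lemma tangent_powr:
  fixes p u m :: real
  assumes p: "p > 1" and u: "u \<ge> 0" and m: "m \<ge> 0"
  shows "p * m powr (p-1) * u \<le> u powr p + (p-1) * m powr p"
proof -
  have q: "p/(p-1) > 1" using p by (simp add: field_simps)
  have pq: "1/p + 1/(p/(p-1)) = 1" using p by (simp add: field_simps)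
  have "u * m powr (p-1) \<le> u powr p / p + (m powr (p-1)) powr (p/(p-1)) / (p/(p-1))"
    by (rule Youngs_inequality[OF p q pq u]) simp
  also have "(m powr (p-1)) powr (p/(p-1)) = m powr p"
    using p by (simp add: powr_powr)
  finally have "u * m powr (p-1) \<le> u powr p / p + m powr p / (p/(p-1))" .
  then have "p * (u * m powr (p-1)) \<le> p * (u powr p / p + m powr p / (p/(p-1)))"
    using p by (intro mult_left_mono) auto
  also have "\<dots> = u powr p + (p-1) * m powr p" using p by (simp add: field_simps)
  finally show ?thesis by (simp add: algebra_simps)
qed

lemma jensen_nn:
  fixes k F :: "'a \<Rightarrow> real"
  assumes p: "p > 1" and k: "\<And>z. z \<in> A \<Longrightarrow> k z \<ge> 0" and F: "\<And>z. z \<in> A \<Longrightarrow> F z \<ge> 0"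
    and K: "(\<integral>\<^sup>+z. ennreal (k z) \<partial>count_space A) = ennreal K" and K0: "K \<ge> 0"
    and Aa: "(\<integral>\<^sup>+z. ennreal (k z * F z) \<partial>count_space A) = ennreal Aa" and A0: "Aa \<ge> 0"
  shows "ennreal (Aa powr p) \<le> ennreal (K powr (p-1)) * (\<integral>\<^sup>+z. ennreal (k z * F z powr p) \<partial>count_space A)"
proof (cases "K = 0")
  case True
  have kz: "k z = 0" if "z \<in> A" for z
  proof -
    have "ennreal (k z) \<le> (\<integral>\<^sup>+z. ennreal (k z) \<partial>count_space A)" by (rule nn_integral_ge_point[OF that])
    then show ?thesis using K True k[OF that] by simp
  qed
  have "(\<integral>\<^sup>+z. ennreal (k z * F z) \<partial>count_space A) = (\<integral>\<^sup>+z. 0 \<partial>count_space A)"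
    by (rule nn_integral_cong) (simp add: kz)
  then have "Aa = 0" using Aa A0 by simp
  then show ?thesis by simp
next
  case False
  then have Kp: "K > 0" using K0 by simp
  define m where "m = Aa / K"
  have m0: "m \<ge> 0" using A0 Kp by (simp add: m_def)
  have AmK: "Aa = m * K" using Kp by (simp add: m_def)
  define S where "S = (\<integral>\<^sup>+z. ennreal (k z * F z powr p) \<partial>count_space A)"
  show ?thesis
  proof (cases "S = \<infinity>")
    case True
    have "K powr (p-1) > 0" using Kp by simp
    then show ?thesis using True by (simp add: S_def[symmetric] ennreal_mult_top)
  next
    case False
    then obtain Sr where Sr: "S = ennreal Sr" "Sr \<ge> 0" by (cases S) auto
    have c0: "p * m powr (p-1) \<ge> 0" using p by simp
    have "ennreal (p * m powr (p-1) * Aa) = ennreal (p * m powr (p-1)) * (\<integral>\<^sup>+z. ennreal (k z * F z) \<partial>count_space A)"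
      using Aa c0 A0 by (simp add: ennreal_mult)
    also have "\<dots> = (\<integral>\<^sup>+z. ennreal (p * m powr (p-1) * (k z * F z)) \<partial>count_space A)"
      by (subst nn_integral_cmult[symmetric]) (auto intro!: nn_integral_cong simp: ennreal_mult c0 k F)
    also have "\<dots> \<le> (\<integral>\<^sup>+z. ennreal (k z * F z powr p) + ennreal ((p-1) * m powr p) * ennreal (k z) \<partial>count_space A)"
    proof (rule nn_integral_mono)
      fix z assume "z \<in> space (count_space A)"
      then have z: "z \<in> A" by simp
      have "p * m powr (p-1) * (k z * F z) = k z * (p * m powr (p-1) * F z)" by (simp add: algebra_simps)
      also have "\<dots> \<le> k z * (F z powr p + (p-1) * m powr p)"
        by (rule mult_left_mono[OF tangent_powr[OF p F[OF z] m0] k[OF z]])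
      also have "\<dots> = k z * F z powr p + (p-1) * m powr p * k z" by (simp add: algebra_simps)
      finally have "ennreal (p * m powr (p-1) * (k z * F z)) \<le> ennreal (k z * F z powr p + (p-1) * m powr p * k z)"
        by (rule ennreal_leI)
      also have "\<dots> = ennreal (k z * F z powr p) + ennreal ((p-1) * m powr p) * ennreal (k z)"
      proof -
        have a: "0 \<le> k z * F z powr p" using k[OF z] by simp
        have c: "0 \<le> (p-1) * m powr p" using p by simp
        have b: "0 \<le> (p-1) * m powr p * k z" using c k[OF z] by simp
        show ?thesis
          using ennreal_plus[OF a b] ennreal_mult[OF c k[OF z]] by simp
      qed
      finally show "ennreal (p * m powr (p-1) * (k z * F z)) \<le> ennreal (k z * F z powr p) + ennreal ((p-1) * m powr p) * ennreal (k z)" .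
    qed
    also have "\<dots> = S + ennreal ((p-1) * m powr p) * ennreal K"
      by (simp add: nn_integral_add nn_integral_cmult S_def K)
    also have "\<dots> = ennreal (Sr + (p-1) * m powr p * K)"
      using Sr p m0 K0 by (simp add: ennreal_mult)
    finally have ineq: "p * m powr (p-1) * Aa \<le> Sr + (p-1) * m powr p * K"
      using Sr p m0 K0 by (subst (asm) ennreal_le_iff) auto
    have mm: "m powr (p-1) * m = m powr p"
    proof (cases "m = 0")
      case True then show ?thesis using p by simp
    next
      case False then show ?thesis using m0 powr_add[of m "p-1" 1] by simp
    qed
    have e1: "p * m powr (p-1) * Aa = p * (m powr p * K)" using mm by (simp add: AmK)
    have mK: "m powr p * K \<le> Sr" using ineq unfolding e1 by (simp add: algebra_simps)
    have KK: "K powr p = K powr (p-1) * K" using Kp powr_add[of K "p-1" 1] by simp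
    have "Aa powr p = m powr p * K powr p" using m0 K0 by (simp add: AmK powr_mult)
    also have "\<dots> = K powr (p-1) * (m powr p * K)" by (simp add: KK)
    also have "\<dots> \<le> K powr (p-1) * Sr" by (rule mult_left_mono[OF mK]) simp
    finally have "ennreal (Aa powr p) \<le> ennreal (K powr (p-1) * Sr)" by (rule ennreal_leI)
    then show ?thesis using Sr by (simp add: ennreal_mult S_def[symmetric])
  qed
qed

lemma geom_nat:
  fixes r :: real assumes "0 \<le> r" "r < 1"
  shows "(\<integral>\<^sup>+(n::nat). ennreal (r ^ n) \<partial>count_space UNIV) = ennreal (1 / (1 - r))"
  using assms by (simp add: nn_integral_count_space_nat suminf_ennreal_eq geometric_sums)

lemma geom_int:
  fixes \<alpha> :: real assumes a: "\<alpha> > 0"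
  shows "(\<integral>\<^sup>+(m::int). ennreal (exp (-\<alpha> * \<bar>real_of_int m\<bar>)) \<partial>count_space UNIV) \<le> ennreal (2 / (1 - exp (-\<alpha>)))"
proof -
  define r where "r = exp (-\<alpha>)"
  have r0: "0 \<le> r" "r < 1" using a by (auto simp: r_def)
  define g where "g m = ennreal (exp (-\<alpha> * \<bar>real_of_int m\<bar>))" for m :: int
  have gn: "g (int n) = ennreal (r ^ n)" for n
    by (simp add: g_def r_def exp_of_nat_mult[symmetric] algebra_simps)
  have gneg: "g (- int n - 1) \<le> ennreal (r ^ n)" for n
  proof -
    have "exp (-\<alpha> * \<bar>real_of_int (- int n - 1)\<bar>) \<le> exp (-\<alpha> * real n)"
      using a by (simp add: mult_left_mono)
    also have "\<dots> = r ^ n" by (simp add: r_def exp_of_nat_mult[symmetric] algebra_simps)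
    finally show ?thesis unfolding g_def by (rule ennreal_leI)
  qed
  have split: "(\<integral>\<^sup>+m. g m \<partial>count_space UNIV)
      = (\<integral>\<^sup>+m. g m * indicator {0..} m + g m * indicator {..<0} m \<partial>count_space UNIV)"
    by (rule nn_integral_cong) (auto split: split_indicator)
  also have "\<dots> = (\<integral>\<^sup>+m. g m \<partial>count_space {0..}) + (\<integral>\<^sup>+m. g m \<partial>count_space {..<0})"
    by (simp add: nn_integral_add nn_integral_count_space_indicator)
  also have "(\<integral>\<^sup>+m. g m \<partial>count_space {0..}) = (\<integral>\<^sup>+(n::nat). g (int n) \<partial>count_space UNIV)"
  proof -
    have "bij_betw int UNIV {0::int..}"
    proof (rule bij_betwI')
      fix y :: int assume "y \<in> {0..}" then show "\<exists>x\<in>UNIV. y = int x"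
        by (intro bexI[of _ "nat y"]) auto
    qed auto
    then show ?thesis by (rule nn_integral_bij_count_space[symmetric])
  qed
  also have "\<dots> = ennreal (1 / (1 - r))" by (simp add: gn geom_nat r0)
  also have "(\<integral>\<^sup>+m. g m \<partial>count_space {..<0}) = (\<integral>\<^sup>+(n::nat). g (- int n - 1) \<partial>count_space UNIV)"
  proof -
    have "bij_betw (\<lambda>n::nat. - int n - 1) UNIV {..<0::int}"
    proof (rule bij_betwI')
      fix x y :: nat show "(- int x - 1 = - int y - 1) = (x = y)" by simp
    next
      fix x :: nat show "- int x - 1 \<in> {..<0}" by simp
    next
      fix y :: int assume "y \<in> {..<0}" then show "\<exists>x\<in>UNIV. y = - int x - 1"
        by (intro bexI[of _ "nat (- y - 1)"]) auto
    qed
    then show ?thesis by (rule nn_integral_bij_count_space[symmetric])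
  qed
  also have "\<dots> \<le> (\<integral>\<^sup>+(n::nat). ennreal (r ^ n) \<partial>count_space UNIV)"
    by (rule nn_integral_mono) (simp add: gneg)
  also have "\<dots> = ennreal (1 / (1 - r))" by (simp add: geom_nat r0)
  finally have "(\<integral>\<^sup>+m. g m \<partial>count_space UNIV) \<le> ennreal (1 / (1 - r)) + ennreal (1 / (1 - r))"
    by simp
  also have "\<dots> = ennreal (2 / (1 - r))" using r0 by (simp add: ennreal_plus[symmetric] del: ennreal_plus)
  finally show ?thesis by (simp add: g_def r_def)
qed

lemma enorm_ge: "enorm u \<ge> (\<bar>real_of_int (fst u)\<bar> + \<bar>real_of_int (snd u)\<bar>) / 2"
proof -
  have "\<bar>real_of_int (fst u)\<bar> \<le> enorm u" unfolding enorm_def by (rule real_le_rsqrt) simp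
  moreover have "\<bar>real_of_int (snd u)\<bar> \<le> enorm u" unfolding enorm_def by (rule real_le_rsqrt) simp
  ultimately show ?thesis by simp
qed

lemma lattice_sum:
  fixes s \<sigma> :: real
  assumes s: "0 < s" "s \<le> 1" and \<sigma>: "\<sigma> \<ge> s"
  shows "(\<integral>\<^sup>+(u::pt). ennreal (exp (-\<sigma> * enorm u)) \<partial>count_space UNIV) \<le> ennreal (36 / s\<^sup>2)"
proof -
  define \<alpha> where "\<alpha> = s / 2"
  have a: "\<alpha> > 0" using s by (simp add: \<alpha>_def)
  define e1 where "e1 m = ennreal (exp (-\<alpha> * \<bar>real_of_int m\<bar>))" for m :: int
  have pt: "ennreal (exp (-\<sigma> * enorm u)) \<le> e1 (fst u) * e1 (snd u)" for u :: pt
  proof -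
    have "-\<sigma> * enorm u \<le> -s * enorm u" using \<sigma> enorm_nonneg[of u] by (simp add: mult_right_mono)
    also have "\<dots> \<le> -\<alpha> * \<bar>real_of_int (fst u)\<bar> + -\<alpha> * \<bar>real_of_int (snd u)\<bar>"
    proof -
      have "s * (\<bar>real_of_int (fst u)\<bar> + \<bar>real_of_int (snd u)\<bar>) \<le> s * (enorm u * 2)"
        using enorm_ge[of u] s by (intro mult_left_mono) auto
      then show ?thesis by (simp add: \<alpha>_def field_simps)
    qed
    finally have "exp (-\<sigma> * enorm u) \<le> exp (-\<alpha> * \<bar>real_of_int (fst u)\<bar>) * exp (-\<alpha> * \<bar>real_of_int (snd u)\<bar>)"
      by (simp add: exp_add[symmetric])
    then show ?thesis by (simp add: e1_def ennreal_mult[symmetric])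
  qed
  have "(\<integral>\<^sup>+(u::pt). ennreal (exp (-\<sigma> * enorm u)) \<partial>count_space UNIV) \<le> (\<integral>\<^sup>+(u::pt). e1 (fst u) * e1 (snd u) \<partial>count_space UNIV)"
    by (rule nn_integral_mono) (rule pt)
  also have "\<dots> = (\<integral>\<^sup>+m. \<integral>\<^sup>+n. e1 m * e1 n \<partial>count_space UNIV \<partial>count_space UNIV)"
    using nn_integral_count_space_Times[of "UNIV::int set" "UNIV::int set" "\<lambda>u. e1 (fst u) * e1 (snd u)"]
    by simp
  also have "\<dots> = (\<integral>\<^sup>+m. e1 m \<partial>count_space UNIV) * (\<integral>\<^sup>+m. e1 m \<partial>count_space UNIV)"
    by (simp add: nn_integral_cmult nn_integral_multc)
  also have "\<dots> \<le> ennreal (2 / (1 - exp (-\<alpha>))) * ennreal (2 / (1 - exp (-\<alpha>)))"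
    using geom_int[OF a] unfolding e1_def by (intro mult_mono) auto
  also have "\<dots> \<le> ennreal (6 / s) * ennreal (6 / s)"
  proof -
    have e: "exp \<alpha> \<ge> 1 + \<alpha>" by (rule exp_ge_add_one_self)
    have "exp (-\<alpha>) \<le> 1 / (1 + \<alpha>)" using e a by (simp add: exp_minus field_simps)
    then have "1 - exp (-\<alpha>) \<ge> \<alpha> / (1 + \<alpha>)" using a by (simp add: field_simps)
    moreover have "\<alpha> / (1 + \<alpha>) \<ge> s / 3" using s by (simp add: \<alpha>_def field_simps)
    ultimately have d: "1 - exp (-\<alpha>) \<ge> s / 3" by linarith
    have "2 / (1 - exp (-\<alpha>)) \<le> 2 / (s / 3)"
    proof (rule divide_left_mono)
      show "s / 3 \<le> 1 - exp (-\<alpha>)" by (rule d)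
      have "0 < 1 - exp (-\<alpha>)" using d s by linarith
      then show "0 < (1 - exp (-\<alpha>)) * (s / 3)" using s by simp
    qed simp
    then have "2 / (1 - exp (-\<alpha>)) \<le> 6 / s" by simp
    then have "ennreal (2 / (1 - exp (-\<alpha>))) \<le> ennreal (6 / s)" by (rule ennreal_leI)
    then show ?thesis by (intro mult_mono) auto
  qed
  also have "\<dots> = ennreal (36 / s\<^sup>2)" using s by (simp add: ennreal_mult[symmetric] power2_eq_square)
  finally show ?thesis .
qed

lemma bij_minus_left: "bij_betw (\<lambda>z::pt. y - z) UNIV UNIV"
proof (rule bij_betwI')
  fix z :: pt show "\<exists>x\<in>UNIV. z = y - x" by (intro bexI[of _ "y - z"]) auto
qed auto

lemma bij_minus_right: "bij_betw (\<lambda>y::pt. y - z) UNIV UNIV"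
proof (rule bij_betwI')
  fix y :: pt show "\<exists>x\<in>UNIV. y = x - z" by (intro bexI[of _ "y + z"]) auto
qed auto

lemma w_pos: "w t z > 0" by (simp add: w_def)

lemma g_bounds:
  fixes q1 f :: "pt \<Rightarrow> real" and t C M p :: real and n :: nat
  assumes q1: "\<And>x. q1 x \<ge> 0"
    and ksum: "(\<lambda>x. exp (t * enorm x) * qn q1 n x) summable_on UNIV"
    and kC: "(\<Sum>\<^sub>\<infinity>x. exp (t * enorm x) * qn q1 n x) \<le> C"
    and t: "t \<ge> 0" and p: "p > 1"
    and M: "\<And>z. \<bar>f z / w t z\<bar> \<le> M"
  shows "qf q1 n (\<lambda>z. \<bar>f z\<bar>) y / w t y \<ge> 0"
    and "qf q1 n (\<lambda>z. \<bar>f z\<bar>) y / w t y \<le> C * M"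
    and "(\<integral>\<^sup>+y. ennreal ((qf q1 n (\<lambda>z. \<bar>f z\<bar>) y / w t y) powr p) \<partial>count_space UNIV)
           \<le> ennreal (C powr p) * (\<integral>\<^sup>+z. ennreal (\<bar>f z / w t z\<bar> powr p) \<partial>count_space UNIV)"
proof -
  define g where "g y = qf q1 n (\<lambda>z. \<bar>f z\<bar>) y / w t y" for y
  define k where "k u = exp (t * enorm u) * qn q1 n u" for u
  define F where "F z = \<bar>f z / w t z\<bar>" for z
  define K where "K = (\<Sum>\<^sub>\<infinity>x. k x)"
  have qn0: "\<And>x. qn q1 n x \<ge> 0" by (rule qn_nonneg[OF q1])
  have k0: "k u \<ge> 0" for u by (simp add: k_def qn0)
  have F0: "F z \<ge> 0" for z by (simp add: F_def)
  have K0: "K \<ge> 0" unfolding K_def by (rule infsum_nonneg) (simp add: k0)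
  have KC: "K \<le> C" using kC by (simp add: K_def k_def)
  have M0: "M \<ge> 0" using M[of 0] by linarith
  have Kint: "(\<integral>\<^sup>+u. ennreal (k u) \<partial>count_space UNIV) = ennreal K"
    unfolding K_def by (rule nn_infsum_eq) (use ksum in \<open>simp_all add: k_def[abs_def] qn0\<close>)
  have Ktr1: "(\<integral>\<^sup>+z. ennreal (k (y - z)) \<partial>count_space UNIV) = ennreal K" for y
    using nn_integral_bij_count_space[OF bij_minus_left[of y], of "\<lambda>u. ennreal (k u)"] Kint by simp
  have Ktr2: "(\<integral>\<^sup>+y. ennreal (k (y - z)) \<partial>count_space UNIV) = ennreal K" for z
    using nn_integral_bij_count_space[OF bij_minus_right[of z], of "\<lambda>u. ennreal (k u)"] Kint by simp
  have Fz: "F z = \<bar>f z\<bar> * exp (t * enorm z)" for z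
    by (simp add: F_def w_def abs_mult exp_minus field_simps)
  have g0: "g y \<ge> 0" for y
    unfolding g_def qf_def using w_pos[of t y] by (intro divide_nonneg_pos infsum_nonneg) (auto simp: qn0)
  define G where "G y = (\<integral>\<^sup>+z. ennreal (k (y - z) * F z) \<partial>count_space UNIV)" for y
  have gG: "ennreal (g y) \<le> G y" for y
  proof -
    have "g y = exp (t * enorm y) * (\<Sum>\<^sub>\<infinity>z. qn q1 n (y - z) * \<bar>f z\<bar>)"
      by (simp add: g_def qf_def w_def exp_minus field_simps)
    then have "ennreal (g y) = ennreal (exp (t * enorm y)) * ennreal (\<Sum>\<^sub>\<infinity>z. qn q1 n (y - z) * \<bar>f z\<bar>)"
      by (simp add: ennreal_mult infsum_nonneg qn0)
    also have "\<dots> \<le> ennreal (exp (t * enorm y)) * (\<integral>\<^sup>+z. ennreal (qn q1 n (y - z) * \<bar>f z\<bar>) \<partial>count_space UNIV)"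
      by (intro mult_left_mono nn_infsum_le) (auto simp: qn0)
    also have "\<dots> = (\<integral>\<^sup>+z. ennreal (exp (t * enorm y) * (qn q1 n (y - z) * \<bar>f z\<bar>)) \<partial>count_space UNIV)"
      by (subst nn_integral_cmult[symmetric]) (auto intro!: nn_integral_cong simp: ennreal_mult qn0)
    also have "\<dots> \<le> G y"
      unfolding G_def
    proof (rule nn_integral_mono)
      fix z
      have "exp (t * enorm y) \<le> exp (t * enorm (y - z)) * exp (t * enorm z)"
        using enorm_triangle[of y z] t by (simp add: exp_add[symmetric] mult_left_mono distrib_left[symmetric])
      then have "exp (t * enorm y) * (qn q1 n (y - z) * \<bar>f z\<bar>) \<le> exp (t * enorm (y - z)) * exp (t * enorm z) * (qn q1 n (y - z) * \<bar>f z\<bar>)"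
        by (rule mult_right_mono) (simp add: qn0)
      also have "\<dots> = k (y - z) * F z" by (simp add: k_def Fz)
      finally show "ennreal (exp (t * enorm y) * (qn q1 n (y - z) * \<bar>f z\<bar>)) \<le> ennreal (k (y - z) * F z)"
        by (rule ennreal_leI)
    qed
    finally show ?thesis .
  qed
  have GM: "G y \<le> ennreal (K * M)" for y
  proof -
    have "G y \<le> (\<integral>\<^sup>+z. ennreal (k (y - z)) * ennreal M \<partial>count_space UNIV)"
      unfolding G_def
    proof (rule nn_integral_mono)
      fix z
      have "k (y - z) * F z \<le> k (y - z) * M" unfolding F_def using M[of z] k0[of "y - z"] by (rule mult_left_mono)
      then show "ennreal (k (y - z) * F z) \<le> ennreal (k (y - z)) * ennreal M"
        using k0[of "y-z"] M0 by (simp add: ennreal_mult[symmetric])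
    qed
    also have "\<dots> = ennreal K * ennreal M" by (simp add: nn_integral_multc Ktr1)
    finally show ?thesis using K0 M0 by (simp add: ennreal_mult)
  qed
  have Gfin: "\<exists>Ar. G y = ennreal Ar \<and> 0 \<le> Ar \<and> Ar \<le> K * M" for y
  proof -
    have "G y \<noteq> \<infinity>" using GM[of y] by (auto simp: top_unique)
    then obtain Ar where "G y = ennreal Ar" "0 \<le> Ar" by (cases "G y") auto
    moreover have "Ar \<le> K * M" using GM[of y] calculation K0 M0 by simp
    ultimately show ?thesis by blast
  qed
  show "g y \<ge> 0" for y using g0 unfolding g_def .
  show "g y \<le> C * M" for y
  proof -
    obtain Ar where Ar: "G y = ennreal Ar" "0 \<le> Ar" "Ar \<le> K * M" using Gfin by blast
    have "g y \<le> Ar" using gG[of y] Ar by simp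
    also have "\<dots> \<le> C * M" using Ar KC M0 by (meson order_trans mult_right_mono)
    finally show ?thesis unfolding g_def .
  qed
  have gp: "ennreal (g y powr p) \<le> ennreal (K powr (p-1)) * (\<integral>\<^sup>+z. ennreal (k (y - z) * F z powr p) \<partial>count_space UNIV)" for y
  proof -
    obtain Ar where Ar: "G y = ennreal Ar" "0 \<le> Ar" "Ar \<le> K * M" using Gfin by blast
    have "g y \<le> Ar" using gG[of y] Ar by simp
    then have "g y powr p \<le> Ar powr p" using g0[of y] p by (intro powr_mono2) auto
    then have "ennreal (g y powr p) \<le> ennreal (Ar powr p)" by (rule ennreal_leI)
    also have "\<dots> \<le> ennreal (K powr (p-1)) * (\<integral>\<^sup>+z. ennreal (k (y - z) * F z powr p) \<partial>count_space UNIV)"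
      by (rule jensen_nn[OF p _ _ Ktr1 K0 _ Ar(2)]) (use k0 F0 Ar(1) G_def in auto)
    finally show ?thesis .
  qed
  have "(\<integral>\<^sup>+y. ennreal (g y powr p) \<partial>count_space UNIV)
      \<le> (\<integral>\<^sup>+y. ennreal (K powr (p-1)) * (\<integral>\<^sup>+z. ennreal (k (y - z) * F z powr p) \<partial>count_space UNIV) \<partial>count_space UNIV)"
    by (rule nn_integral_mono) (rule gp)
  also have "\<dots> = ennreal (K powr (p-1)) * (\<integral>\<^sup>+y. \<integral>\<^sup>+z. ennreal (k (y - z) * F z powr p) \<partial>count_space UNIV \<partial>count_space UNIV)"
    by (simp add: nn_integral_cmult)
  also have "(\<integral>\<^sup>+y. \<integral>\<^sup>+z. ennreal (k (y - z) * F z powr p) \<partial>count_space UNIV \<partial>count_space UNIV)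
      = (\<integral>\<^sup>+z. \<integral>\<^sup>+y. ennreal (k (y - z) * F z powr p) \<partial>count_space UNIV \<partial>count_space UNIV)"
    by (rule nn_integral_count_space_nn_integral) auto
  also have "\<dots> = (\<integral>\<^sup>+z. ennreal (F z powr p) * ennreal K \<partial>count_space UNIV)"
  proof (rule nn_integral_cong)
    fix z
    have "(\<integral>\<^sup>+y. ennreal (k (y - z) * F z powr p) \<partial>count_space UNIV)
        = (\<integral>\<^sup>+y. ennreal (k (y - z)) * ennreal (F z powr p) \<partial>count_space UNIV)"
      by (simp add: ennreal_mult k0)
    also have "\<dots> = ennreal K * ennreal (F z powr p)" by (subst nn_integral_multc) (simp_all add: Ktr2)
    also have "\<dots> = ennreal (F z powr p) * ennreal K" by (rule mult.commute)
    finally show "(\<integral>\<^sup>+y. ennreal (k (y - z) * F z powr p) \<partial>count_space UNIV) = ennreal (F z powr p) * ennreal K" .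
  qed
  also have "\<dots> = ennreal K * (\<integral>\<^sup>+z. ennreal (F z powr p) \<partial>count_space UNIV)"
    by (subst nn_integral_multc) (simp_all add: mult.commute)
  finally have "(\<integral>\<^sup>+y. ennreal (g y powr p) \<partial>count_space UNIV)
      \<le> ennreal (K powr (p-1)) * ennreal K * (\<integral>\<^sup>+z. ennreal (F z powr p) \<partial>count_space UNIV)"
    by (simp add: mult.assoc)
  also have "ennreal (K powr (p-1)) * ennreal K = ennreal (K powr p)"
  proof (cases "K = 0")
    case True then show ?thesis using p by simp
  next
    case False then show ?thesis using K0 powr_add[of K "p-1" 1] by (simp add: ennreal_mult[symmetric])
  qed
  also have "ennreal (K powr p) \<le> ennreal (C powr p)"
    using K0 KC p by (intro ennreal_leI powr_mono2) auto
  finally show "(\<integral>\<^sup>+y. ennreal ((qf q1 n (\<lambda>z. \<bar>f z\<bar>) y / w t y) powr p) \<partial>count_space UNIV)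
           \<le> ennreal (C powr p) * (\<integral>\<^sup>+z. ennreal (\<bar>f z / w t z\<bar> powr p) \<partial>count_space UNIV)"
    by (simp add: g_def F_def mult_right_mono)
qed

lemma multi_bound:
  fixes \<Gamma> Ee :: "pt \<Rightarrow> ennreal" and D :: "nat set"
  assumes D: "finite D" "j0 \<in> D" "k0 \<in> D" "a \<in> D" "b \<in> D" "j0 \<noteq> k0" "j0 \<noteq> a" "j0 \<noteq> b" "a \<noteq> b"
    and B: "\<And>y. \<Gamma> y \<le> B"
    and Gm: "(\<integral>\<^sup>+y. \<Gamma> y \<partial>count_space UNIV) \<le> Gm"
    and E: "\<And>v. (\<integral>\<^sup>+u. Ee (u - v) \<partial>count_space UNIV) \<le> Eb"
  shows "(\<integral>\<^sup>+x. indicator {x k0} (x j0) * (\<Prod>i\<in>D. \<Gamma> (x i)) * Ee (x a - x b) \<partial>count_space (PiE D (\<lambda>_. UNIV)))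
         \<le> B * B * Eb * Gm ^ (card D - 2)"
proof -
  define D1 where "D1 = D - {j0}"
  have D1: "D = insert j0 D1" "j0 \<notin> D1" "finite D1" "k0 \<in> D1" "a \<in> D1" "b \<in> D1"
    using D by (auto simp: D1_def)
  define D2 where "D2 = D1 - {a}"
  have D2: "D1 = insert a D2" "a \<notin> D2" "finite D2" "b \<in> D2"
    using D D1 by (auto simp: D2_def)
  have cD2: "card D2 = card D - 2"
    using D1 D2 by (simp add: card_insert_if)
  define \<Psi>0 where "\<Psi>0 y = (\<Prod>i\<in>D1. \<Gamma> (y i)) * Ee (y a - y b)" for y :: "nat \<Rightarrow> pt"
  have "(\<integral>\<^sup>+x. indicator {x k0} (x j0) * (\<Prod>i\<in>D. \<Gamma> (x i)) * Ee (x a - x b) \<partial>count_space (PiE D (\<lambda>_. UNIV)))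
      = (\<integral>\<^sup>+u. \<integral>\<^sup>+y. indicator {(y(j0:=u)) k0} ((y(j0:=u)) j0) * (\<Prod>i\<in>insert j0 D1. \<Gamma> ((y(j0:=u)) i))
           * Ee ((y(j0:=u)) a - (y(j0:=u)) b) \<partial>count_space (PiE D1 (\<lambda>_. UNIV)) \<partial>count_space UNIV)"
    unfolding D1(1) by (rule PiE_peel[OF D1(3,2)])
  also have "\<dots> \<le> (\<integral>\<^sup>+u. \<integral>\<^sup>+y. (B * \<Psi>0 y) * indicator {y k0} u \<partial>count_space (PiE D1 (\<lambda>_. UNIV)) \<partial>count_space UNIV)"
  proof (intro nn_integral_mono)
    fix u y
    have pr: "(\<Prod>i\<in>insert j0 D1. \<Gamma> ((y(j0:=u)) i)) = \<Gamma> u * (\<Prod>i\<in>D1. \<Gamma> (y i))"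
    proof -
      have "(\<Prod>i\<in>D1. \<Gamma> ((y(j0:=u)) i)) = (\<Prod>i\<in>D1. \<Gamma> (y i))"
        by (rule prod.cong) (use D1(2) in auto)
      then show ?thesis using D1(2,3) by simp
    qed
    have "indicator {(y(j0:=u)) k0} ((y(j0:=u)) j0) * (\<Prod>i\<in>insert j0 D1. \<Gamma> ((y(j0:=u)) i))
           * Ee ((y(j0:=u)) a - (y(j0:=u)) b) = indicator {y k0} u * \<Gamma> u * \<Psi>0 y"
      using D(6,7,8) unfolding pr \<Psi>0_def by (simp add: mult.assoc)
    also have "\<dots> \<le> indicator {y k0} u * B * \<Psi>0 y"
      by (intro mult_right_mono mult_left_mono B) auto
    finally show "indicator {(y(j0:=u)) k0} ((y(j0:=u)) j0) * (\<Prod>i\<in>insert j0 D1. \<Gamma> ((y(j0:=u)) i))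
           * Ee ((y(j0:=u)) a - (y(j0:=u)) b) \<le> (B * \<Psi>0 y) * indicator {y k0} u"
      by (simp add: mult_ac)
  qed
  also have "\<dots> = (\<integral>\<^sup>+y. \<integral>\<^sup>+u. (B * \<Psi>0 y) * indicator {y k0} u \<partial>count_space UNIV \<partial>count_space (PiE D1 (\<lambda>_. UNIV)))"
    by (rule nn_integral_count_space_nn_integral[symmetric]) (auto simp: countable_PiE D1(3))
  also have "\<dots> = (\<integral>\<^sup>+y. B * \<Psi>0 y \<partial>count_space (PiE D1 (\<lambda>_. UNIV)))"
    by (rule nn_integral_cong) (simp add: nn_integral_cmult_indicator)
  also have "\<dots> = B * (\<integral>\<^sup>+y. \<Psi>0 y \<partial>count_space (PiE D1 (\<lambda>_. UNIV)))"
    by (rule nn_integral_cmult) simp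
  also have "\<dots> \<le> B * (B * Eb * Gm ^ (card D - 2))"
  proof -
    have "(\<integral>\<^sup>+y. \<Psi>0 y \<partial>count_space (PiE D1 (\<lambda>_. UNIV)))
        = (\<integral>\<^sup>+u. \<integral>\<^sup>+y. \<Psi>0 (y(a:=u)) \<partial>count_space (PiE D2 (\<lambda>_. UNIV)) \<partial>count_space UNIV)"
      unfolding D2(1) by (rule PiE_peel[OF D2(3,2)])
    also have "\<dots> = (\<integral>\<^sup>+u. \<integral>\<^sup>+y. (\<Prod>i\<in>D2. \<Gamma> (y i)) * (\<Gamma> u * Ee (u - y b)) \<partial>count_space (PiE D2 (\<lambda>_. UNIV)) \<partial>count_space UNIV)"
    proof (intro nn_integral_cong)
      fix u y
      have "(\<Prod>i\<in>D2. \<Gamma> ((y(a:=u)) i)) = (\<Prod>i\<in>D2. \<Gamma> (y i))"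
        by (rule prod.cong) (use D2(2) in auto)
      then show "\<Psi>0 (y(a:=u)) = (\<Prod>i\<in>D2. \<Gamma> (y i)) * (\<Gamma> u * Ee (u - y b))"
        unfolding \<Psi>0_def D2(1) using D2(2,3) D(9) by (simp add: mult_ac)
    qed
    also have "\<dots> = (\<integral>\<^sup>+y. \<integral>\<^sup>+u. (\<Prod>i\<in>D2. \<Gamma> (y i)) * (\<Gamma> u * Ee (u - y b)) \<partial>count_space UNIV \<partial>count_space (PiE D2 (\<lambda>_. UNIV)))"
      by (rule nn_integral_count_space_nn_integral[symmetric]) (auto simp: countable_PiE D2(3))
    also have "\<dots> \<le> (\<integral>\<^sup>+y. (\<Prod>i\<in>D2. \<Gamma> (y i)) * (B * Eb) \<partial>count_space (PiE D2 (\<lambda>_. UNIV)))"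
    proof (rule nn_integral_mono)
      fix y
      have "(\<integral>\<^sup>+u. (\<Prod>i\<in>D2. \<Gamma> (y i)) * (\<Gamma> u * Ee (u - y b)) \<partial>count_space UNIV)
          = (\<Prod>i\<in>D2. \<Gamma> (y i)) * (\<integral>\<^sup>+u. \<Gamma> u * Ee (u - y b) \<partial>count_space UNIV)"
        by (rule nn_integral_cmult) simp
      also have "(\<integral>\<^sup>+u. \<Gamma> u * Ee (u - y b) \<partial>count_space UNIV) \<le> (\<integral>\<^sup>+u. B * Ee (u - y b) \<partial>count_space UNIV)"
        by (intro nn_integral_mono mult_right_mono B) auto
      also have "\<dots> = B * (\<integral>\<^sup>+u. Ee (u - y b) \<partial>count_space UNIV)"
        by (rule nn_integral_cmult) simp
      also have "\<dots> \<le> B * Eb" by (intro mult_left_mono E) auto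
      finally show "(\<integral>\<^sup>+u. (\<Prod>i\<in>D2. \<Gamma> (y i)) * (\<Gamma> u * Ee (u - y b)) \<partial>count_space UNIV)
          \<le> (\<Prod>i\<in>D2. \<Gamma> (y i)) * (B * Eb)"
        by (simp add: mult_left_mono)
    qed
    also have "\<dots> = (\<integral>\<^sup>+y. (\<Prod>i\<in>D2. \<Gamma> (y i)) \<partial>count_space (PiE D2 (\<lambda>_. UNIV))) * (B * Eb)"
      by (rule nn_integral_multc) simp
    also have "(\<integral>\<^sup>+y. (\<Prod>i\<in>D2. \<Gamma> (y i)) \<partial>count_space (PiE D2 (\<lambda>_. UNIV))) = (\<Prod>i\<in>D2. \<integral>\<^sup>+u. \<Gamma> u \<partial>count_space UNIV)"
      by (rule PiE_prod_integral[OF D2(3)])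
    also have "\<dots> = (\<integral>\<^sup>+u. \<Gamma> u \<partial>count_space UNIV) ^ card D2" by simp
    also have "\<dots> \<le> Gm ^ card D2" by (intro power_mono Gm) auto
    finally have "(\<integral>\<^sup>+y. \<Psi>0 y \<partial>count_space (PiE D1 (\<lambda>_. UNIV))) \<le> B * Eb * Gm ^ (card D - 2)"
      unfolding cD2 by (simp add: mult_right_mono mult_ac)
    then show ?thesis by (rule mult_left_mono) simp
  qed
  finally show ?thesis by (simp add: mult_ac)
qed

lemma pow_powr: "((x::real) ^ n) powr a = (x powr a) ^ n"
  by (induction n) (simp_all add: powr_mult)

lemma exp_powr': "exp (y::real) powr p = exp (p * y)"
  by (simp add: powr_def)

lemma powr_inv_cancel: "(x::real) \<ge> 0 \<Longrightarrow> p > 0 \<Longrightarrow> (x powr p) powr (1/p) = x"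
  by (simp add: powr_powr)

lemma final_alg:
  fixes p C M SFr s L :: real and h :: nat
  assumes "p > 1" "C \<ge> 0" "M \<ge> 0" "SFr \<ge> 0" "s > 0" "L \<ge> 0" "h \<ge> 2"
  shows "(L powr p * ((C*M) powr p * (C*M) powr p * (36 / s^2) * (C powr p * SFr)^(h-2))) powr (1/p)
        = 36 powr (1/p) * C^h * L / s powr (2/p) * M^2 * (SFr powr (1/p))^(h-2)"
proof -
  have p0: "p > 0" using assms by simp
  have s2: "(s^2) powr (1/p) = s powr (2/p)"
  proof -
    have "s^2 = s powr 2" using assms by simp
    then show ?thesis by (simp add: powr_powr)
  qed
  have e1: "(L powr p) powr (1/p) = L" using assms p0 by (simp add: powr_inv_cancel)
  have e2: "((C*M) powr p) powr (1/p) = C*M" using assms p0 by (simp add: powr_inv_cancel)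
  have e3: "((C powr p * SFr)^(h-2)) powr (1/p) = C^(h-2) * (SFr powr (1/p))^(h-2)"
    using assms p0 by (simp add: pow_powr powr_mult powr_inv_cancel power_mult_distrib)
  have hh: "C^h = C^(h-2) * C * C"
  proof -
    have "h = (h-2) + 2" using assms by simp
    then have "C^h = C^(h-2) * C^2" by (metis power_add)
    then show ?thesis by (simp add: power2_eq_square)
  qed
  have "(L powr p * ((C*M) powr p * (C*M) powr p * (36 / s^2) * (C powr p * SFr)^(h-2))) powr (1/p)
      = L * ((C*M) * (C*M) * (36 powr (1/p) / s powr (2/p)) * (C^(h-2) * (SFr powr (1/p))^(h-2)))"
  proof -
    have eC: "(C powr p) powr (1/p) = C" and eM: "(M powr p) powr (1/p) = M"
      using assms p0 by (simp_all add: powr_inv_cancel)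
    show ?thesis by (simp only: powr_mult powr_divide e1 eC eM e3 s2)
  qed
  also have "\<dots> = 36 powr (1/p) * C^h * L / s powr (2/p) * M^2 * (SFr powr (1/p))^(h-2)"
    by (simp add: hh power2_eq_square field_simps)
  finally show ?thesis .
qed

lemma find_pair:
  assumes part: "partition_on {1..h} I" and Ins: "I \<noteq> singletons h"
    and nab: "\<not> (\<exists>B\<in>I. {a, b} \<subseteq> B)"
  shows "\<exists>j0 k0. j0 \<in> {1..h} \<and> k0 \<in> {1..h} \<and> j0 \<noteq> k0 \<and> j0 \<noteq> a \<and> j0 \<noteq> b \<and> (\<forall>x. sim I x \<longrightarrow> x j0 = x k0)"
proof -
  have U: "\<Union>I = {1..h}" and ne: "{} \<notin> I" using part by (auto simp: partition_on_def)
  have "\<exists>B\<in>I. \<exists>j\<in>B. \<exists>k\<in>B. j \<noteq> k"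
  proof (rule ccontr)
    assume nn: "\<not> (\<exists>B\<in>I. \<exists>j\<in>B. \<exists>k\<in>B. j \<noteq> k)"
    have sing: "\<exists>i. B = {i}" if "B \<in> I" for B
    proof -
      from that ne obtain i where "i \<in> B" by (metis ex_in_conv)
      then have "B = {i}" using nn that by blast
      then show ?thesis by blast
    qed
    have "I = singletons h"
    proof
      show "I \<subseteq> singletons h"
      proof
        fix B assume BI: "B \<in> I"
        then obtain i where Bi: "B = {i}" using sing by blast
        moreover have "i \<in> {1..h}" using U BI Bi by blast
        ultimately show "B \<in> singletons h" by (auto simp: singletons_def)
      qed
    next
      show "singletons h \<subseteq> I"
      proof
        fix B assume "B \<in> singletons h"
        then obtain i where i: "B = {i}" "i \<in> {1..h}" by (auto simp: singletons_def)
        then obtain B' where B': "B' \<in> I" "i \<in> B'" using U by blast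
        moreover obtain i' where "B' = {i'}" using sing B'(1) by blast
        ultimately show "B \<in> I" using i by simp
      qed
    qed
    with Ins show False by simp
  qed
  then obtain B j k where B: "B \<in> I" "j \<in> B" "k \<in> B" "j \<noteq> k" by blast
  have BD: "j \<in> {1..h}" "k \<in> {1..h}" using B U by blast+
  have simB: "\<forall>x. sim I x \<longrightarrow> x j = x k" "\<forall>x. sim I x \<longrightarrow> x k = x j"
    using B unfolding sim_def by metis+
  show ?thesis
  proof (cases "j \<notin> {a,b}")
    case True then show ?thesis
      by (intro exI[of _ j] exI[of _ k]) (use B BD simB in auto)
  next
    case jab: False
    show ?thesis
    proof (cases "k \<notin> {a,b}")
      case True then show ?thesis
        by (intro exI[of _ k] exI[of _ j]) (use B BD simB in auto)
    next
      case False
      with jab B have "{a,b} \<subseteq> B" by auto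
      with nab B(1) show ?thesis by blast
    qed
  qed
qed

lemma ennreal_prod4: "0 \<le> x \<Longrightarrow> 0 \<le> y \<Longrightarrow> 0 \<le> z \<Longrightarrow>
  ennreal x * ennreal x * ennreal y * ennreal z ^ n = ennreal (x * x * y * z ^ n)"
  by (simp add: ennreal_mult ennreal_power)

theorem proposition4p20:
  fixes q1 :: "pt \<Rightarrow> real" and cc :: real
    and h :: nat and t s p :: real and L :: nat and f :: "pt \<Rightarrow> real"
  assumes q1_nonneg: "\<And>x. q1 x \<ge> 0"
    and q1_prob: "(q1 has_sum 1) UNIV"
    and q1_sym: "\<And>x. q1 x = q1 (- x)"
    and q1_subgauss: "\<exists>c>0. \<forall>t::real. \<forall>a\<in>{1,2::nat}.
           (\<lambda>x. exp (t * coord a x) * q1 x) summable_on UNIV \<and>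
           (\<Sum>\<^sub>\<infinity>x. exp (t * coord a x) * q1 x) \<le> exp (c * t\<^sup>2 / 2)"
    and cc_ge: "cc \<ge> 1"
    and cc1: "\<And>t n a. t \<ge> 0 \<Longrightarrow> n \<ge> 1 \<Longrightarrow> a \<in> {1,2} \<Longrightarrow>
           (\<lambda>x. exp (t * coord a x) * qn q1 n x) summable_on UNIV \<and>
           (\<Sum>\<^sub>\<infinity>x. exp (t * coord a x) * qn q1 n x) \<le> exp (cc * t\<^sup>2 * real n / 2)"
    and cc2: "\<And>t n a. t \<ge> 0 \<Longrightarrow> n \<ge> 1 \<Longrightarrow> a \<in> {1,2} \<Longrightarrow>
           (\<lambda>x. exp (t * coord a x) * (qn q1 n x)\<^sup>2 / qn q1 (2 * n) (0, 0)) summable_on UNIV \<and>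
           (\<Sum>\<^sub>\<infinity>x. exp (t * coord a x) * (qn q1 n x)\<^sup>2 / qn q1 (2 * n) (0, 0))
             \<le> exp (cc * t\<^sup>2 * real n / 2)"
    and cc3: "\<And>t n. t \<ge> 0 \<Longrightarrow> n \<ge> 1 \<Longrightarrow>
           (\<lambda>x. exp (t * enorm x) * qn q1 n x) summable_on UNIV \<and>
           (\<Sum>\<^sub>\<infinity>x. exp (t * enorm x) * qn q1 n x) \<le> cc * exp (2 * cc * t\<^sup>2 * real n)"
    and cc4: "\<And>t n x. t \<ge> 0 \<Longrightarrow> n \<ge> 1 \<Longrightarrow>
           exp (t * enorm x) * qn q1 n x \<le> cc * exp (2 * cc * t\<^sup>2 * real n) / real n"
    and h3: "h \<ge> 3"
    and t0: "t \<ge> 0"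
    and s01: "0 < s" "s \<le> 1"
    and p1: "p > 1"
  shows "\<forall>a\<in>{1..h}. \<forall>b\<in>{1..h}. \<forall>I. a \<noteq> b \<longrightarrow> partition_on {1..h} I \<longrightarrow> I \<noteq> singletons h
           \<longrightarrow> \<not> (\<exists>B\<in>I. {a, b} \<subseteq> B) \<longrightarrow>
           lpnorm p (PiE {1..h} (\<lambda>_. UNIV))
             (\<lambda>x. qhat q1 h (\<lambda>z. \<bar>f z\<bar>) I L x * VV a b s x / WW h t x)
           \<le> ennreal (36 powr (1 / p) * (cc * exp (2 * cc * t\<^sup>2 * real L)) ^ h
                       * real L / s powr (2 / p))
             * linfnorm UNIV (\<lambda>z. f z / w t z) ^ 2
             * lpnorm p UNIV (\<lambda>z. f z / w t z) ^ (h - 2)"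
proof (intro ballI allI impI)
  fix a b I
  assume a: "a \<in> {1..h}" and b: "b \<in> {1..h}" and ab: "a \<noteq> b" and part: "partition_on {1..h} I"
    and Ins: "I \<noteq> singletons h" and nab: "\<not> (\<exists>B\<in>I. {a, b} \<subseteq> B)"
  obtain j0 k0 where jk: "j0 \<in> {1..h}" "k0 \<in> {1..h}" "j0 \<noteq> k0" "j0 \<noteq> a" "j0 \<noteq> b"
    and simjk: "\<And>x. sim I x \<Longrightarrow> x j0 = x k0"
    using find_pair[OF part Ins nab] by blast
  define C where "C = cc * exp (2 * cc * t\<^sup>2 * real L)"
  define R where "R = 36 powr (1 / p) * C ^ h * real L / s powr (2 / p)"
  define Fw where "Fw = (\<lambda>z. f z / w t z)"
  define SF where "SF = (\<integral>\<^sup>+z. ennreal (\<bar>Fw z\<bar> powr p) \<partial>count_space UNIV)"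
  define LF where "LF = (\<lambda>x. qhat q1 h (\<lambda>z. \<bar>f z\<bar>) I L x * VV a b s x / WW h t x)"
  define S where "S = (\<integral>\<^sup>+x. ennreal (\<bar>LF x\<bar> powr p) \<partial>count_space (PiE {1..h} (\<lambda>_. UNIV)))"
  define linf where "linf = linfnorm UNIV Fw"
  have C1: "C \<ge> 1"
  proof -
    have "exp (2 * cc * t\<^sup>2 * real L) \<ge> 1" using cc_ge by simp
    then have "1 * 1 \<le> cc * exp (2 * cc * t\<^sup>2 * real L)" using cc_ge by (intro mult_mono) auto
    then show ?thesis unfolding C_def by simp
  qed
  have lhs_eq: "lpnorm p (PiE {1..h} (\<lambda>_. UNIV)) LF = (if S = top then top else ennreal (enn2real S powr (1/p)))"
    by (simp add: lpnorm_def S_def Let_def)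
  have rhs_lp: "lpnorm p UNIV Fw = (if SF = top then top else ennreal (enn2real SF powr (1/p)))"
    by (simp add: lpnorm_def SF_def Let_def)
  have main: "lpnorm p (PiE {1..h} (\<lambda>_. UNIV)) LF \<le> ennreal R * linf ^ 2 * lpnorm p UNIV Fw ^ (h - 2)"
  proof (cases "L = 0")
    case True
    have "LF x = 0" for x by (simp add: LF_def qhat_def True)
    then have "S = 0" by (simp add: S_def)
    then show ?thesis unfolding lhs_eq by simp
  next
    case False
    then have L1: "L \<ge> 1" by simp
    have R0: "R > 0" unfolding R_def using C1 False s01 by simp
    show ?thesis
    proof (cases "linf = top \<or> SF = top")
      case True
      obtain z0 where z0: "f z0 \<noteq> 0"
      proof (rule ccontr)
        assume "\<not> thesis"
        then have f0: "\<And>z. f z = 0" using that by blast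
        then have "linf = 0" "SF = 0" by (simp_all add: linf_def linfnorm_def Fw_def SF_def)
        with True show False by simp
      qed
      have Fz0: "\<bar>Fw z0\<bar> > 0" using z0 w_pos[of t z0] by (simp add: Fw_def)
      have "ennreal \<bar>Fw z0\<bar> \<le> linf" unfolding linf_def linfnorm_def by (rule SUP_upper) simp
      then have linf0: "linf \<noteq> 0" using Fz0 by (auto simp: bot_unique[symmetric])
      have lp0: "lpnorm p UNIV Fw \<noteq> 0"
      proof (cases "SF = top")
        case True then show ?thesis by (simp add: rhs_lp)
      next
        case False
        have ge: "ennreal (\<bar>Fw z0\<bar> powr p) \<le> SF" unfolding SF_def by (rule nn_integral_ge_point) simp
        have pos: "\<bar>Fw z0\<bar> powr p > 0" using Fz0 by simp
        from False obtain r where r: "SF = ennreal r" "r \<ge> 0" by (cases SF) auto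
        have "\<bar>Fw z0\<bar> powr p \<le> r" using ge r by simp
        then have "r > 0" using pos by linarith
        then show ?thesis using r by (simp add: rhs_lp)
      qed
      have "ennreal R * linf ^ 2 * lpnorm p UNIV Fw ^ (h - 2) = top"
      proof (cases "linf = top")
        case True
        then have "linf ^ 2 = top" by simp
        moreover have "lpnorm p UNIV Fw ^ (h - 2) \<noteq> 0" using lp0 by simp
        ultimately show ?thesis using R0 by (simp add: ennreal_mult_eq_top_iff)
      next
        case False
        with True have "SF = top" by simp
        then have "lpnorm p UNIV Fw ^ (h - 2) = top" using h3 by (simp add: rhs_lp)
        moreover have "linf ^ 2 \<noteq> 0" using linf0 by simp
        ultimately show ?thesis using R0 by (simp add: ennreal_mult_eq_top_iff)
      qed
      then show ?thesis by simp
    next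
      case False
      then obtain M where M: "linf = ennreal M" "M \<ge> 0" by (cases linf) auto
      from False obtain SFr where SFr: "SF = ennreal SFr" "SFr \<ge> 0" by (cases SF) auto
      have HM: "\<bar>f z / w t z\<bar> \<le> M" for z
      proof -
        have "ennreal \<bar>Fw z\<bar> \<le> linf" unfolding linf_def linfnorm_def by (rule SUP_upper) simp
        then show ?thesis using M by (simp add: Fw_def)
      qed
      define gg where "gg n y = qf q1 n (\<lambda>z. \<bar>f z\<bar>) y / w t y" for n y
      define an where "an n x = qI q1 h (\<lambda>z. \<bar>f z\<bar>) I n x * VV a b s x / WW h t x" for n x
      define Bn where "Bn = (C*M) powr p * (C*M) powr p * (36 / s^2) * (C powr p * SFr)^(h-2)"
      have qn0: "\<And>n x. qn q1 n x \<ge> 0" by (rule qn_nonneg[OF q1_nonneg])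
      have qf0: "qf q1 n (\<lambda>z. \<bar>f z\<bar>) y \<ge> 0" for n y
        unfolding qf_def by (rule infsum_nonneg) (simp add: qn0)
      have gg0: "gg n y \<ge> 0" for n y unfolding gg_def using qf0 w_pos[of t y] by simp
      have an0: "an n x \<ge> 0" for n x
      proof -
        have P1: "0 \<le> (\<Prod>i\<in>{1..h}. qf q1 n (\<lambda>z. \<bar>f z\<bar>) (x i))" by (intro prod_nonneg qf0)
        have P2: "0 < (\<Prod>i\<in>{1..h}. w t (x i))" by (intro prod_pos w_pos)
        show ?thesis unfolding an_def qI_def VV_def WW_def using P1 P2
          by (auto intro!: divide_nonneg_pos mult_nonneg_nonneg)
      qed
      have an_form: "an n x = (\<Prod>i\<in>{1..h}. gg n (x i)) * exp (- s * enorm (x a - x b))" if "sim I x" for n x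
      proof -
        have "(\<Prod>i\<in>{1..h}. gg n (x i)) = (\<Prod>i\<in>{1..h}. qf q1 n (\<lambda>z. \<bar>f z\<bar>) (x i)) / (\<Prod>i\<in>{1..h}. w t (x i))"
          unfolding gg_def by (rule prod_dividef)
        then show ?thesis using that by (simp add: an_def qI_def VV_def WW_def)
      qed
      have an_pt: "ennreal (an n x powr p) \<le> indicator {x k0} (x j0) * (\<Prod>i\<in>{1..h}. ennreal (gg n (x i) powr p))
                     * ennreal (exp (-(s*p) * enorm (x a - x b)))" for n x
      proof (cases "sim I x")
        case True
        have "an n x powr p = (\<Prod>i\<in>{1..h}. gg n (x i) powr p) * exp (-(s*p) * enorm (x a - x b))"
          unfolding an_form[OF True] by (simp add: powr_mult prod_powr_distrib exp_powr' algebra_simps)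
        then have "ennreal (an n x powr p) = (\<Prod>i\<in>{1..h}. ennreal (gg n (x i) powr p)) * ennreal (exp (-(s*p) * enorm (x a - x b)))"
          by (simp add: ennreal_mult prod_ennreal prod_nonneg)
        then show ?thesis using simjk[OF True] by simp
      next
        case False
        then have "an n x = 0" by (simp add: an_def qI_def)
        then show ?thesis using p1 by simp
      qed
      have per_n: "(\<integral>\<^sup>+x. ennreal (an n x powr p) \<partial>count_space (PiE {1..h} (\<lambda>_. UNIV))) \<le> ennreal Bn"
        if n: "n \<in> {1..L}" for n
      proof -
        have n1: "n \<ge> 1" using n by simp
        have ks: "(\<lambda>x. exp (t * enorm x) * qn q1 n x) summable_on UNIV"
          using cc3[OF t0 n1] by blast
        have kC: "(\<Sum>\<^sub>\<infinity>x. exp (t * enorm x) * qn q1 n x) \<le> C"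
        proof -
          have "exp (2 * cc * t\<^sup>2 * real n) \<le> exp (2 * cc * t\<^sup>2 * real L)"
            using n cc_ge by (simp add: mult_left_mono)
          then have "cc * exp (2 * cc * t\<^sup>2 * real n) \<le> C"
            unfolding C_def using cc_ge by (simp add: mult_left_mono)
          then show ?thesis using cc3[OF t0 n1] by linarith
        qed
        note gb = g_bounds[OF q1_nonneg ks kC t0 p1 HM]
        have CM0: "C * M \<ge> 0" using C1 M by simp
        have "(\<integral>\<^sup>+x. ennreal (an n x powr p) \<partial>count_space (PiE {1..h} (\<lambda>_. UNIV)))
            \<le> (\<integral>\<^sup>+x. indicator {x k0} (x j0) * (\<Prod>i\<in>{1..h}. ennreal (gg n (x i) powr p))
                     * ennreal (exp (-(s*p) * enorm (x a - x b))) \<partial>count_space (PiE {1..h} (\<lambda>_. UNIV)))"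
          by (rule nn_integral_mono) (rule an_pt)
        also have "\<dots> \<le> ennreal ((C*M) powr p) * ennreal ((C*M) powr p) * ennreal (36 / s^2) * ennreal (C powr p * SFr) ^ (card {1..h} - 2)"
        proof (rule multi_bound[where \<Gamma>="\<lambda>y. ennreal (gg n y powr p)" and Ee="\<lambda>u. ennreal (exp (-(s*p) * enorm u))"])
          show "finite {1..h}" by simp
          show "j0 \<in> {1..h}" "k0 \<in> {1..h}" "a \<in> {1..h}" "b \<in> {1..h}" "j0 \<noteq> k0" "j0 \<noteq> a" "j0 \<noteq> b" "a \<noteq> b"
            using jk a b ab by auto
          show "ennreal (gg n y powr p) \<le> ennreal ((C*M) powr p)" for y
            using gb(2)[of y] gg0[of n y] p1 by (intro ennreal_leI powr_mono2) (auto simp: gg_def)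
          show "(\<integral>\<^sup>+y. ennreal (gg n y powr p) \<partial>count_space UNIV) \<le> ennreal (C powr p * SFr)"
            using gb(3) SFr by (simp add: gg_def SF_def Fw_def ennreal_mult)
          show "(\<integral>\<^sup>+u. ennreal (exp (-(s*p) * enorm (u - v))) \<partial>count_space UNIV) \<le> ennreal (36 / s^2)" for v
          proof -
            have "(\<integral>\<^sup>+u. ennreal (exp (-(s*p) * enorm (u - v))) \<partial>count_space UNIV)
                = (\<integral>\<^sup>+u. ennreal (exp (-(s*p) * enorm u)) \<partial>count_space UNIV)"
              by (rule nn_integral_bij_count_space[OF bij_minus_right])
            also have "\<dots> \<le> ennreal (36 / s^2)"
              by (rule lattice_sum[OF s01]) (use p1 s01 in simp)
            finally show ?thesis .
          qed
        qed
        also have "\<dots> = ennreal Bn"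
        proof -
          have cardh: "card {1..h} = h" by simp
          show ?thesis unfolding Bn_def cardh by (rule ennreal_prod4) (use SFr in simp_all)
        qed
        finally show ?thesis .
      qed
      have LF_sum: "LF x = (\<Sum>n = 1..L. an n x)" for x
        by (simp add: LF_def qhat_def an_def sum_distrib_right sum_divide_distrib)
      have pw: "ennreal (\<bar>LF x\<bar> powr p) \<le> ennreal (real L powr (p-1)) * (\<Sum>n = 1..L. ennreal (an n x powr p))" for x
      proof -
        have K: "(\<integral>\<^sup>+n. ennreal 1 \<partial>count_space {1..L}) = ennreal (real L)"
          by (simp add: nn_integral_count_space_finite ennreal_of_nat_eq_real_of_nat)
        have A: "(\<integral>\<^sup>+n. ennreal (1 * an n x) \<partial>count_space {1..L}) = ennreal (\<Sum>n = 1..L. an n x)"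
          by (simp add: nn_integral_count_space_finite an0)
        have "ennreal ((\<Sum>n = 1..L. an n x) powr p)
            \<le> ennreal (real L powr (p-1)) * (\<integral>\<^sup>+n. ennreal (1 * an n x powr p) \<partial>count_space {1..L})"
          by (rule jensen_nn[OF p1 _ _ K _ A]) (simp_all add: an0 sum_nonneg)
        also have "(\<integral>\<^sup>+n. ennreal (1 * an n x powr p) \<partial>count_space {1..L}) = (\<Sum>n = 1..L. ennreal (an n x powr p))"
          by (simp add: nn_integral_count_space_finite)
        finally show ?thesis using an0 by (simp add: LF_sum sum_nonneg)
      qed
      have "S \<le> (\<integral>\<^sup>+x. ennreal (real L powr (p-1)) * (\<Sum>n = 1..L. ennreal (an n x powr p)) \<partial>count_space (PiE {1..h} (\<lambda>_. UNIV)))"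
        unfolding S_def by (rule nn_integral_mono) (rule pw)
      also have "\<dots> = ennreal (real L powr (p-1)) * (\<Sum>n = 1..L. \<integral>\<^sup>+x. ennreal (an n x powr p) \<partial>count_space (PiE {1..h} (\<lambda>_. UNIV)))"
        apply (subst nn_integral_cmult, simp)
        apply (subst nn_integral_sum, simp_all)
        done
      also have "\<dots> \<le> ennreal (real L powr (p-1)) * (\<Sum>n = 1..L. ennreal Bn)"
        by (intro mult_left_mono sum_mono per_n) auto
      also have "\<dots> = ennreal (real L powr p * Bn)"
      proof -
        have "real L powr (p-1) * real L = real L powr p"
          using False powr_add[of "real L" "p-1" 1] by simp
        moreover have "Bn \<ge> 0" unfolding Bn_def using C1 M SFr s01 by simp
        ultimately show ?thesis by (simp add: ennreal_mult[symmetric] ennreal_of_nat_eq_real_of_nat mult.assoc[symmetric])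
      qed
      finally have Sle: "S \<le> ennreal (real L powr p * Bn)" .
      then have Sfin: "S \<noteq> top" by (auto simp: top_unique)
      have "enn2real S \<le> real L powr p * Bn"
        using Sle by (intro enn2real_leI) (auto simp: Bn_def C1 M SFr s01)
      then have "enn2real S powr (1/p) \<le> (real L powr p * Bn) powr (1/p)"
        using p1 by (intro powr_mono2) auto
      also have "\<dots> = 36 powr (1/p) * C^h * real L / s powr (2/p) * M^2 * (SFr powr (1/p))^(h-2)"
        unfolding Bn_def by (rule final_alg) (use p1 C1 M SFr s01 h3 in auto)
      finally have X: "enn2real S powr (1/p) \<le> R * M^2 * (SFr powr (1/p))^(h-2)"
        by (simp add: R_def)
      have "lpnorm p (PiE {1..h} (\<lambda>_. UNIV)) LF \<le> ennreal (R * M^2 * (SFr powr (1/p))^(h-2))"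
        unfolding lhs_eq using Sfin X by (simp add: ennreal_leI)
      also have "\<dots> = ennreal R * linf ^ 2 * lpnorm p UNIV Fw ^ (h - 2)"
        using R0 M SFr by (simp add: rhs_lp ennreal_mult ennreal_power)
      finally show ?thesis .
    qed
  qed
  then show "lpnorm p (PiE {1..h} (\<lambda>_. UNIV))
             (\<lambda>x. qhat q1 h (\<lambda>z. \<bar>f z\<bar>) I L x * VV a b s x / WW h t x)
           \<le> ennreal (36 powr (1 / p) * (cc * exp (2 * cc * t\<^sup>2 * real L)) ^ h
                       * real L / s powr (2 / p))
             * linfnorm UNIV (\<lambda>z. f z / w t z) ^ 2
             * lpnorm p UNIV (\<lambda>z. f z / w t z) ^ (h - 2)"
    by (simp add: LF_def R_def C_def linf_def Fw_def)
qed

end
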